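(* Let $a_1,a_2,a_3$ be distinct positive integers and let $m_1,m_2$ be distinct positive integers. Then there exists a permutation $\pi$ of $\{1,2,3\}$ such that $$(a_{\pi(1)}-m_1)(a_{\pi(1)}-m_2)(a_{\pi(1)}+a_{\pi(2)}-m_1)(a_{\pi(1)}+a_{\pi(2)}-m_2)\neq 0.$$ *)

theory Defs
  imports Main "HOL-Combinatorics.Permutations"
begin

end

theory Submission
  imports Defs
begin

lemma perm3:
  assumes "{i,j,l} = {1::nat,2,3}" "i \<noteq> j" "i \<noteq> l" "j \<noteq> l"
  shows "(\<lambda>k. if k=1 then i else if k=2 then j else if k=3 then l else k) permutes {1,2,3}"
  unfolding permutes_def using assms
  apply (intro conjI allI)
   apply auto[1]
  apply (simp add: Ex1_def)
  apply (smt (verit) insert_iff singletonD)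
  done

lemma arith6:
  fixes x y z m1 m2 :: int
  assumes "x>0" "y>0" "z>0" "x\<noteq>y" "x\<noteq>z" "y\<noteq>z" "m1\<noteq>m2"
  and "x=m1 \<or> x=m2 \<or> x+y=m1 \<or> x+y=m2"
  and "x=m1 \<or> x=m2 \<or> x+z=m1 \<or> x+z=m2"
  and "y=m1 \<or> y=m2 \<or> y+x=m1 \<or> y+x=m2"
  and "y=m1 \<or> y=m2 \<or> y+z=m1 \<or> y+z=m2"
  and "z=m1 \<or> z=m2 \<or> z+x=m1 \<or> z+x=m2"
  and "z=m1 \<or> z=m2 \<or> z+y=m1 \<or> z+y=m2"
  shows False
  using assms by smt

theorem theorem1:
  fixes a :: "nat \<Rightarrow> int" and m1 m2 :: int
  assumes "\<And>i. i \<in> {1,2,3} \<Longrightarrow> a i > 0"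
    and "inj_on a {1,2,3}"
    and "m1 > 0" and "m2 > 0" and "m1 \<noteq> m2"
  shows "\<exists>\<pi>. \<pi> permutes {1::nat,2,3} \<and>
    (a (\<pi> 1) - m1) * (a (\<pi> 1) - m2) * (a (\<pi> 1) + a (\<pi> 2) - m1) * (a (\<pi> 1) + a (\<pi> 2) - m2) \<noteq> 0"
proof -
  have p: "\<And>i j l. {i,j,l} = {1::nat,2,3} \<Longrightarrow> i \<noteq> j \<Longrightarrow> i \<noteq> l \<Longrightarrow> j \<noteq> l \<Longrightarrow>
      (a i - m1) * (a i - m2) * (a i + a j - m1) * (a i + a j - m2) \<noteq> 0 \<Longrightarrow> \<exists>\<pi>. \<pi> permutes {1::nat,2,3} \<and>
    (a (\<pi> 1) - m1) * (a (\<pi> 1) - m2) * (a (\<pi> 1) + a (\<pi> 2) - m1) * (a (\<pi> 1) + a (\<pi> 2) - m2) \<noteq> 0"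
  proof -
    fix i j l :: nat
    assume h: "{i,j,l} = {1::nat,2,3}" "i \<noteq> j" "i \<noteq> l" "j \<noteq> l"
      "(a i - m1) * (a i - m2) * (a i + a j - m1) * (a i + a j - m2) \<noteq> 0"
    show "\<exists>\<pi>. \<pi> permutes {1::nat,2,3} \<and>
    (a (\<pi> 1) - m1) * (a (\<pi> 1) - m2) * (a (\<pi> 1) + a (\<pi> 2) - m1) * (a (\<pi> 1) + a (\<pi> 2) - m2) \<noteq> 0"
      by (rule exI[of _ "\<lambda>k. if k=1 then i else if k=2 then j else if k=3 then l else k"])
         (use h perm3[OF h(1-4)] in simp)
  qed
  have d: "a 1 \<noteq> a 2" "a 1 \<noteq> a 3" "a 2 \<noteq> a 3" using assms(2) by (auto dest: inj_onD)
  have pos: "a 1 > 0" "a 2 > 0" "a 3 > 0" using assms(1) by auto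
  have "((a 1 - m1) * (a 1 - m2) * (a 1 + a 2 - m1) * (a 1 + a 2 - m2) \<noteq> 0)
     \<or> ((a 1 - m1) * (a 1 - m2) * (a 1 + a 3 - m1) * (a 1 + a 3 - m2) \<noteq> 0)
     \<or> ((a 2 - m1) * (a 2 - m2) * (a 2 + a 1 - m1) * (a 2 + a 1 - m2) \<noteq> 0)
     \<or> ((a 2 - m1) * (a 2 - m2) * (a 2 + a 3 - m1) * (a 2 + a 3 - m2) \<noteq> 0)
     \<or> ((a 3 - m1) * (a 3 - m2) * (a 3 + a 1 - m1) * (a 3 + a 1 - m2) \<noteq> 0)
     \<or> ((a 3 - m1) * (a 3 - m2) * (a 3 + a 2 - m1) * (a 3 + a 2 - m2) \<noteq> 0)"
    proof (rule ccontr)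
    assume "\<not> ?thesis"
    then show False
      unfolding mult_eq_0_iff de_Morgan_disj not_not eq_iff_diff_eq_0[symmetric]
      using arith6[OF pos d assms(5)] by (simp add: add.commute)
  qed
  then show ?thesis
    apply (elim disjE)
    apply (rule p[of 1 2 3]; simp; fail)
    apply (rule p[of 1 3 2]; simp add: insert_commute; fail)
    apply (rule p[of 2 1 3]; simp add: insert_commute; fail)
    apply (rule p[of 2 3 1]; simp add: insert_commute; fail)
    apply (rule p[of 3 1 2]; simp add: insert_commute; fail)
    apply (rule p[of 3 2 1]; simp add: insert_commute; fail)
    done
qed

end
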